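(* Let $S_n(x)$ be the Stirling polynomials, defined by $\left(\frac{t}{1-e^{-t}}\right)^{x+1}=\sum_{n\ge0}S_n(x)\frac{t^n}{n!}$. Then for every $n\ge0$, $$S_n(x)=n!\sum_{k=0}^{n}\binom{k+x}{k}\sum_{j=0}^{k}\frac{j!\,(-1)^{n+j}}{(n+j)!}\binom{k}{j}\left\{{n+j\atop j}\right\}.$$ *)

theory Defs
  imports "HOL-Computational_Algebra.Formal_Power_Series" "HOL-Combinatorics.Stirling"
begin

text \<open>The formal power series t/(1 - e^(-t)), with constant term 1.\<close>
definition todd_fps :: "real fps" where
  "todd_fps = inverse (fps_shift 1 (1 - fps_exp (-1)))"

text \<open>Real power (1 + u)^a of a series with constant term 1, via the binomial series:
  f^a = (1+X)^a composed with (f - 1).\<close>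
definition fps_rpow :: "real fps \<Rightarrow> real \<Rightarrow> real fps" where
  "fps_rpow f a = fps_binomial a oo (f - 1)"

definition stirling_poly :: "nat \<Rightarrow> real \<Rightarrow> real" where
  "stirling_poly n x = fact n * fps_nth (fps_rpow todd_fps (x + 1)) n"

end

theory Submission
  imports Defs
begin

definition QQ :: "real fps" where "QQ = 1 - fps_exp (-1)"

lemma QQ_deriv: "fps_deriv QQ = 1 - QQ"
  by (simp add: QQ_def fps_eq_iff)

lemma QQ_pow_deriv: "fps_deriv (QQ ^ Suc j) = fps_const (real (Suc j)) * (QQ ^ j - QQ ^ Suc j)"
proof -
  have "fps_deriv (QQ ^ Suc j) = fps_const (real (Suc j)) * fps_deriv QQ * QQ ^ j"
    using fps_deriv_power[of QQ "Suc j"] by simp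
  then show ?thesis by (simp add: QQ_deriv algebra_simps)
qed

lemma QQ_pow_rec: "real (Suc m) * fps_nth (QQ ^ Suc j) (Suc m) = real (Suc j) * (fps_nth (QQ ^ j) (m) - fps_nth (QQ ^ Suc j) (m))"
proof -
  have "fps_nth (fps_deriv (QQ ^ Suc j)) m = fps_nth (fps_const (real (Suc j)) * (QQ ^ j - QQ ^ Suc j)) m"
    by (simp only: QQ_pow_deriv)
  then show ?thesis by (simp only: fps_deriv_nth fps_mult_left_const_nth fps_sub_nth) simp
qed

lemma QQ_pow_nth: "fps_nth (QQ ^ j) (m) = (-1) ^ (m + j) * fact j * real (Stirling m j) / fact m"
proof (induction m arbitrary: j)
  case 0
  then show ?case by (cases j) (auto simp: QQ_def)
next
  case (Suc m)
  show ?case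
  proof (cases j)
    case 0
    then show ?thesis by simp
  next
    case (Suc i)
    have "real (Suc m) * fps_nth (QQ ^ Suc i) (Suc m) = real (Suc i) * (fps_nth (QQ ^ i) (m) - fps_nth (QQ ^ Suc i) (m))"
      by (rule QQ_pow_rec)
    also have "\<dots> = real (Suc i) * ((-1) ^ (m + i) * fact i * real (Stirling m i) / fact m
         - (-1) ^ (m + Suc i) * fact (Suc i) * real (Stirling m (Suc i)) / fact m)"
      by (simp only: Suc.IH)
    also have "\<dots> = (-1) ^ (m + i) * fact (Suc i) * (real (Stirling m i) + real (Suc i) * real (Stirling m (Suc i))) / fact m"
      by (simp add: field_simps)
    finally have "real (Suc m) * fps_nth (QQ ^ Suc i) (Suc m) = (-1) ^ (m + i) * fact (Suc i) * real (Stirling (Suc m) (Suc i)) / fact m"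
      by (simp add: algebra_simps)
    then have "fps_nth (QQ ^ Suc i) (Suc m) = (-1) ^ (m + i) * fact (Suc i) * real (Stirling (Suc m) (Suc i)) / fact m / real (Suc m)"
      by (simp only: nonzero_eq_divide_eq of_nat_Suc mult.commute)
    also have "\<dots> = (-1) ^ (Suc m + Suc i) * fact (Suc i) * real (Stirling (Suc m) (Suc i)) / fact (Suc m)"
      by (simp only: fact_Suc of_nat_Suc power_Suc) (simp add: field_simps)
    finally show ?thesis using Suc by simp
  qed
qed

lemma QQ0: "fps_nth QQ 0 = 0" by (simp add: QQ_def)

definition SS :: "real fps" where "SS = fps_shift 1 QQ"

lemma SS0: "fps_nth SS 0 = 1" by (simp add: SS_def QQ_def)

lemma QQ_eq: "QQ = SS * fps_X"
  unfolding SS_def by (rule fps_shift_times_fps_X[symmetric]) (rule subdegree_geI, auto simp: QQ0 fps_eq_iff QQ_def intro!: exI[of _ 1])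

lemma SS_pow_nth: "fps_nth (SS ^ j) n = fps_nth (QQ ^ j) (n + j)"
  by (simp add: QQ_eq power_mult_distrib fps_X_power_mult_right_nth)

lemma todd_eq: "todd_fps = inverse SS"
  by (simp add: todd_fps_def SS_def QQ_def)

lemma binom_ode: "(1 + fps_X) * fps_deriv (fps_binomial c) = fps_const (c::real) * fps_binomial c"
proof -
  have x10: "fps_nth (1 + fps_X :: real fps) 0 \<noteq> 0" by simp
  have "(1 + fps_X) * fps_deriv (fps_binomial c) = (1 + fps_X) * (fps_const c * fps_binomial c * inverse (1 + fps_X))"
    by (simp add: fps_binomial_deriv fps_divide_unit x10)
  also have "\<dots> = fps_const c * fps_binomial c"
    using inverse_mult_eq_1'[OF x10] by (simp add: algebra_simps)
  finally show ?thesis .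
qed

lemma binom_compose_ode:
  assumes g0: "fps_nth g 0 = 0"
  shows "(1 + g) * fps_deriv (fps_binomial c oo g) = fps_const (c::real) * (fps_binomial c oo g) * fps_deriv g"
proof -
  have "((1 + fps_X) * fps_deriv (fps_binomial c)) oo g = (fps_const c * fps_binomial c) oo g"
    by (simp only: binom_ode)
  then have "(1 + g) * (fps_deriv (fps_binomial c) oo g) = fps_const c * (fps_binomial c oo g)"
    by (simp add: fps_compose_mult_distrib[OF g0] fps_compose_add_distrib g0)
  then show ?thesis
    by (simp add: fps_compose_deriv[OF g0] mult.assoc[symmetric])
qed

lemma T0: "fps_nth (inverse SS) 0 = 1" by (simp add: SS0)

lemma GH: "fps_binomial a oo (inverse SS - 1) = fps_binomial (-a) oo (SS - 1)"
proof -
  define T where "T = inverse SS"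
  define G where "G = fps_binomial a oo (T - 1)"
  define H where "H = fps_binomial (-a) oo (SS - 1)"
  have ST: "SS * T = 1" unfolding T_def by (rule inverse_mult_eq_1') (simp add: SS0)
  have T0': "fps_nth T 0 = 1" using T0 by (simp add: T_def)
  have dT: "fps_deriv T = - fps_deriv SS * T^2"
    unfolding T_def by (rule fps_inverse_deriv) (simp add: SS0)
  have eG: "T * fps_deriv G = fps_const a * G * fps_deriv T"
    using binom_compose_ode[of "T - 1" a] T0' by (simp add: G_def)
  have eH: "SS * fps_deriv H = fps_const (-a) * H * fps_deriv SS"
    using binom_compose_ode[of "SS - 1" "-a"] SS0 by (simp add: H_def)
  have eH': "SS * fps_deriv H = - fps_const a * H * fps_deriv SS" using eH by simp
  have dG: "fps_deriv G = - fps_const a * G * fps_deriv SS * T"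
  proof -
    have "fps_deriv G = SS * (T * fps_deriv G)" using ST by (simp add: mult.assoc[symmetric])
    also have "\<dots> = - fps_const a * G * fps_deriv SS * T * (SS * T)"
      by (simp add: eG dT power2_eq_square algebra_simps del: fps_const_neg)
    finally show ?thesis using ST by simp
  qed
  have dH: "fps_deriv H = - fps_const a * H * fps_deriv SS * T"
  proof -
    have "fps_deriv H = T * (SS * fps_deriv H)" using ST by (simp add: mult.assoc[symmetric] mult.commute)
    also have "\<dots> = - fps_const a * H * fps_deriv SS * T"
      by (simp add: eH' algebra_simps del: fps_const_neg)
    finally show ?thesis .
  qed
  have H0: "fps_nth H 0 = 1" by (simp add: H_def)
  have G0: "fps_nth G 0 = 1" by (simp add: G_def)
  have HH: "H * inverse H = 1" by (rule inverse_mult_eq_1') (simp add: H0)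
  define K where "K = G * inverse H"
  have "fps_deriv K = (fps_deriv G * H - G * fps_deriv H) * (inverse H)^2"
    unfolding K_def using HH by (simp add: fps_inverse_deriv H0 power2_eq_square algebra_simps)
  also have "fps_deriv G * H - G * fps_deriv H = 0" by (simp add: dG dH algebra_simps)
  finally have "fps_deriv K = 0" by simp
  then have "K = fps_const (fps_nth K 0)" by simp
  also have "fps_nth K 0 = 1" by (simp add: K_def G0 H0)
  finally have "K = 1" by simp
  then have "G = H" unfolding K_def using HH
    by (metis mult.assoc mult.commute mult.left_neutral)
  then show ?thesis by (simp add: G_def H_def T_def)
qed

lemma neg_pow_fps: "(1 - SS) ^ k = fps_const ((-1) ^ k) * (SS - 1) ^ k"
proof -
  have "1 - SS = fps_const (-1) * (SS - 1)" by (simp add: fps_eq_iff)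
  then show ?thesis by (simp add: power_mult_distrib fps_const_power)
qed

lemma one_minus_SS_nth:
  "fps_nth ((1 - SS) ^ k) n = (\<Sum>j=0..k. real (k choose j) * (-1) ^ j * fps_nth (SS ^ j) n)"
proof -
  have "(1 - SS) ^ k = (- SS + 1) ^ k" by simp
  also have "\<dots> = (\<Sum>j\<le>k. of_nat (k choose j) * (- SS) ^ j * 1 ^ (k - j))"
    by (rule binomial_ring)
  also have "\<dots> = (\<Sum>j=0..k. fps_const (real (k choose j) * (-1) ^ j) * SS ^ j)"
    unfolding atMost_atLeast0
  proof (intro sum.cong refl)
    fix j
    have m1: "(-1 :: real fps) ^ j = fps_const ((-1) ^ j)"
      by (induct j) simp_all
    have "of_nat (k choose j) * (- SS) ^ j * 1 ^ (k - j) = fps_const (real (k choose j)) * ((-1) ^ j * SS ^ j)"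
      by (simp only: power_minus[of SS j] fps_of_nat[symmetric] power_one mult_1_right)
    also have "\<dots> = fps_const (real (k choose j) * (-1) ^ j) * SS ^ j"
      by (simp only: m1 fps_const_mult[symmetric] mult.assoc)
    finally show "of_nat (k choose j) * (- SS) ^ j * 1 ^ (k - j) = fps_const (real (k choose j) * (-1) ^ j) * SS ^ j" .
  qed
  finally show ?thesis by (simp add: fps_sum_nth)
qed

lemma term_eq:
  "((-(x+1)) gchoose k) * fps_nth ((SS - 1) ^ k) n =
   ((real k + x) gchoose k) *
      (\<Sum>j=0..k. fact j * (-1) ^ (n + j) / fact (n + j) * real (k choose j)
                  * real (Stirling (n + j) j))"
proof -
  have g: "(-(x+1)) gchoose k = (-1)^k * ((real k + x) gchoose k)"
    by (subst gbinomial_negated_upper) simp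
  have c: "(-1)^k * fps_nth ((SS - 1) ^ k) n = fps_nth ((1 - SS) ^ k) n"
    by (simp add: neg_pow_fps)
  have "((-(x+1)) gchoose k) * fps_nth ((SS - 1) ^ k) n = ((real k + x) gchoose k) * fps_nth ((1 - SS) ^ k) n"
    by (simp only: g c[symmetric] mult_ac)
  also have "fps_nth ((1 - SS) ^ k) n = (\<Sum>j=0..k. fact j * (-1) ^ (n + j) / fact (n + j) * real (k choose j)
                  * real (Stirling (n + j) j))"
    unfolding one_minus_SS_nth
  proof (intro sum.cong refl)
    fix j assume "j \<in> {0..k}"
    have "(-1::real) ^ j * (-1) ^ (n + j + j) = (-1) ^ (n + j)"
      by (simp add: power_add)
    then show "real (k choose j) * (-1) ^ j * fps_nth (SS ^ j) n =
      fact j * (-1) ^ (n + j) / fact (n + j) * real (k choose j) * real (Stirling (n + j) j)"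
      unfolding SS_pow_nth QQ_pow_nth by (simp add: field_simps)
  qed
  finally show ?thesis .
qed

theorem mainTheorem8:
  fixes n :: nat and x :: real
  shows "stirling_poly n x =
    fact n * (\<Sum>k=0..n. ((real k + x) gchoose k) *
      (\<Sum>j=0..k. fact j * (-1) ^ (n + j) / fact (n + j) * real (k choose j)
                  * real (Stirling (n + j) j)))"
proof -
  have "stirling_poly n x = fact n * fps_nth (fps_binomial (-(x+1)) oo (SS - 1)) n"
    by (simp add: stirling_poly_def fps_rpow_def todd_eq GH)
  also have "fps_nth (fps_binomial (-(x+1)) oo (SS - 1)) n = (\<Sum>k=0..n. ((-(x+1)) gchoose k) * fps_nth ((SS - 1) ^ k) n)"
    by (simp add: fps_compose_nth)
  also have "\<dots> = (\<Sum>k=0..n. ((real k + x) gchoose k) *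
      (\<Sum>j=0..k. fact j * (-1) ^ (n + j) / fact (n + j) * real (k choose j)
                  * real (Stirling (n + j) j)))"
    by (intro sum.cong refl term_eq)
  finally show ?thesis .
qed
end
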